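(* Let $h\in\mathbb{Z}$, $k\ge1$ and $n\ge0$. The number of partitions $\lambda\vdash n$ having an $h$-fixed hook arising from a part of size $k$ equals the number of partitions $\mu$ of $n+\binom{k}{2}-(h+1)$ such that the minimal excludant of $\mu$ is $k$ and $$h+1+\#\{\text{parts of }\mu\text{ larger than }k\}>\#\{\text{parts of }\mu\text{ smaller than }k\}.$$
   Context: A partition $\lambda=(\lambda_1\ge\cdots\ge\lambda_t>0)$ of $n$ has first-column hook lengths $h_{s,1}(\lambda)=\lambda_s+(t-s)$. An $h$-fixed hook arising from a part of size $k$ is an index $s$ with $h_{s,1}(\lambda)=s+h$ and $\lambda_s=k$. The minimal excludant (mex) of a partition is the smallest positive integer that does not occur as a part. Parts are counted with multiplicity. Partitions of negative integers do not exist (count $0$). *)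

theory Defs
  imports Main
begin

definition is_partition :: "nat list \<Rightarrow> bool" where
  "is_partition xs \<longleftrightarrow> sorted_wrt (\<ge>) xs \<and> (\<forall>p\<in>set xs. p > 0)"

definition partitions_of :: "int \<Rightarrow> nat list set" where
  "partitions_of m = {xs. is_partition xs \<and> int (sum_list xs) = m}"

text \<open>First-column hook length h_{s,1} = lambda_s + (t - s), 1-based index s.\<close>
definition hook1 :: "nat list \<Rightarrow> nat \<Rightarrow> nat" where
  "hook1 xs s = xs ! (s - 1) + (length xs - s)"

definition has_fixed_hook :: "int \<Rightarrow> nat \<Rightarrow> nat list \<Rightarrow> bool" where
  "has_fixed_hook h k xs \<longleftrightarrow>
     (\<exists>s. 1 \<le> s \<and> s \<le> length xs \<and> int (hook1 xs s) = int s + h \<and> xs ! (s - 1) = k)"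

definition mex :: "nat list \<Rightarrow> nat" where
  "mex xs = (LEAST j. 0 < j \<and> j \<notin> set xs)"

end

theory Submission
  imports Defs "HOL-Library.Multiset"
begin


lemma sum_upt_choose: "sum_list [1..<k] = k choose 2"
proof (induction k)
  case 0 then show ?case by simp
next
  case (Suc k)
  have "Suc k choose 2 = (k choose 1) + (k choose 2)"
    using binomial_Suc_Suc[of k 1] by (simp add: numeral_2_eq_2)
  then show ?case using Suc by (cases k) auto
qed

lemma part_app: "0 < k \<Longrightarrow> is_partition (A @ k # B) \<longleftrightarrow>
   is_partition A \<and> is_partition B \<and> (\<forall>a\<in>set A. k \<le> a) \<and> (\<forall>b\<in>set B. b \<le> k)"
  unfolding is_partition_def sorted_wrt_append by (auto intro: order_trans)

lemma stage1:
  assumes "k \<ge> 1"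
  shows "card {lam \<in> partitions_of (int n). has_fixed_hook h k lam} =
    card {(A,B). is_partition A \<and> is_partition B \<and> (\<forall>a\<in>set A. k \<le> a) \<and> (\<forall>b\<in>set B. b \<le> k)
       \<and> int (length B) = h - int k + 1 + int (length A) \<and> sum_list A + k + sum_list B = n}"
    (is "card ?L = card ?X")
proof -
  have "bij_betw (\<lambda>(A,B). A @ k # B) ?X ?L"
  proof (rule bij_betw_imageI)
    show "inj_on (\<lambda>(A,B). A @ k # B) ?X"
    proof (rule inj_onI, clarify)
      fix A B A' B'
      assume h1: "int (length B) = h - int k + 1 + int (length A)"
        and h2: "int (length B') = h - int k + 1 + int (length A')"
        and e: "A @ k # B = A' @ k # B'"
      from arg_cong[OF e, of length] have "length A + length B = length A' + length B'"
        by simp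
      with h1 h2 have "length A = length A'" by linarith
      with e show "A = A' \<and> B = B'" by auto
    qed
  next
    show "(\<lambda>(A,B). A @ k # B) ` ?X = ?L"
    proof
      show "(\<lambda>(A,B). A @ k # B) ` ?X \<subseteq> ?L"
      proof (rule image_subsetI)
        fix x assume "x \<in> ?X"
        then obtain A B where x: "x = (A,B)" and a: "is_partition A" "is_partition B" "\<forall>a\<in>set A. k \<le> a" "\<forall>b\<in>set B. b \<le> k"
          "int (length B) = h - int k + 1 + int (length A)" "sum_list A + k + sum_list B = n" by blast
        have p: "is_partition (A @ k # B)" using a assms part_app by auto
        have "has_fixed_hook h k (A @ k # B)"
          unfolding has_fixed_hook_def hook1_def
          using a by (intro exI[of _ "Suc (length A)"]) (simp add: nth_append)
        moreover have "int (sum_list (A @ k # B)) = int n" using a by simp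
        ultimately show "(\<lambda>(A,B). A @ k # B) x \<in> ?L" using p x by (simp add: partitions_of_def)
      qed
    next
      show "?L \<subseteq> (\<lambda>(A,B). A @ k # B) ` ?X"
      proof
        fix lam assume "lam \<in> ?L"
        then have lp: "is_partition lam" and ls: "sum_list lam = n" and hf: "has_fixed_hook h k lam"
          by (auto simp: partitions_of_def)
        from hf obtain s where s: "1 \<le> s" "s \<le> length lam" "int (hook1 lam s) = int s + h"
           "lam ! (s - 1) = k" unfolding has_fixed_hook_def by auto
        define A where "A = take (s - 1) lam"
        define B where "B = drop s lam"
        have "lam = take (s-1) lam @ lam ! (s-1) # drop (Suc (s-1)) lam"
          by (rule id_take_nth_drop) (use s in auto)
        then have le: "lam = A @ k # B" using s by (simp add: A_def B_def)
        have lA: "length A = s - 1" using s by (simp add: A_def)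
        have lB: "length B = length lam - s" by (simp add: B_def)
        have hk: "int k + int (length lam - s) = int s + h" using s unfolding hook1_def by simp
        have "int (length B) = h - int k + 1 + int (length A)"
          using s lA lB hk by (simp add: of_nat_diff)
        moreover have "sum_list A + k + sum_list B = n" using ls le by simp
        ultimately have "(A,B) \<in> ?X" using lp le part_app[of k A B] assms by auto
        then show "lam \<in> (\<lambda>(A,B). A @ k # B) ` ?X" using le by (simp add: image_iff) blast
      qed
    qed
  qed
  then show ?thesis by (simp add: bij_betw_same_card)
qed


lemma sum_minus1: "\<forall>x\<in>set B. 0 < x \<Longrightarrow> sum_list (map (\<lambda>x. x - 1) B) + length B = sum_list (B::nat list)"
  by (induction B) auto

lemma sum_filter_pos: "sum_list (filter (\<lambda>x. 0 < x) xs) = sum_list (xs::nat list)"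
  by (induction xs) auto

lemma recon:
  "sorted_wrt (\<ge>) B \<Longrightarrow> \<forall>x\<in>set B. (0::nat) < x \<Longrightarrow>
   map Suc (filter (\<lambda>x. 0 < x) (map (\<lambda>x. x - 1) B)) @
     replicate (length B - length (filter (\<lambda>x. 0 < x) (map (\<lambda>x. x - 1) B))) 1 = B"
proof (induction B)
  case Nil then show ?case by simp
next
  case (Cons b B)
  show ?case
  proof (cases "b = 1")
    case True
    then have all1: "\<forall>y\<in>set B. y = 1" using Cons.prems by fastforce
    then have "filter (\<lambda>x. 0 < x) (map (\<lambda>x. x - 1) B) = []" by (induction B) auto
    then show ?thesis using True all1 by (simp add: replicate_length_same)
  next
    case False
    then have "b - 1 > 0" using Cons.prems by auto
    moreover have "length (filter (\<lambda>x. 0 < x) (map (\<lambda>x. x - 1) B)) \<le> length B"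
      by (metis length_filter_le length_map)
    ultimately show ?thesis using Cons by (simp add: Suc_diff_le)
  qed
qed

lemma sorted_minus1: "sorted_wrt (\<ge>) (B::nat list) \<Longrightarrow> sorted_wrt (\<ge>) (map (\<lambda>x. x - 1) B)"
  by (simp add: sorted_wrt_map sorted_wrt_mono_rel[of _ "(\<ge>)"] diff_le_mono)

lemma sorted_minus1': "sorted_wrt (\<ge>) (B::nat list) \<Longrightarrow> sorted_wrt (\<ge>) (map (\<lambda>x. x - Suc 0) B)"
  using sorted_minus1 by simp

lemma sorted_rep: "sorted_wrt (\<ge>) (replicate r (x::nat))"
  by (induction r) auto

lemma sum_rep1: "sum_list (replicate r (Suc 0)) = r"
  by (induction r) auto

lemma stage2:
  assumes "k \<ge> 1"
  shows "card {(A,B). is_partition A \<and> is_partition B \<and> (\<forall>a\<in>set A. k \<le> a) \<and> (\<forall>b\<in>set B. b \<le> k)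
       \<and> int (length B) = h - int k + 1 + int (length A) \<and> sum_list A + k + sum_list B = n} =
    card {(C,D). is_partition C \<and> is_partition D \<and> (\<forall>c\<in>set C. k < c) \<and> (\<forall>d\<in>set D. d < k)
       \<and> int (length D) \<le> h - int k + 1 + int (length C) \<and> int (sum_list C + sum_list D) + h + 1 = int n}"
    (is "card ?X = card ?Y")
proof -
  define f where "f = (\<lambda>(A::nat list,B::nat list). (map Suc A, filter (\<lambda>x. 0 < x) (map (\<lambda>x. x - 1) B)))"
  define g where "g = (\<lambda>(C::nat list,D::nat list). (map (\<lambda>x. x - 1) C,
       map Suc D @ replicate (nat (h - int k + 1 + int (length C)) - length D) (1::nat)))"
  have "bij_betw f ?X ?Y"
  proof (rule bij_betw_byWitness[where f'=g])
    show "\<forall>a\<in>?X. g (f a) = a"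
    proof
      fix x assume "x \<in> ?X"
      then obtain A B where x: "x = (A,B)" and a: "is_partition A" "is_partition B" "\<forall>a\<in>set A. k \<le> a" "\<forall>b\<in>set B. b \<le> k"
          "int (length B) = h - int k + 1 + int (length A)" "sum_list A + k + sum_list B = n" by blast
      have "nat (h - int k + 1 + int (length A)) = length B" using a(5) by simp
      then show "g (f x) = x" using recon[of B] a(2) unfolding x f_def g_def is_partition_def
        by (simp add: comp_def)
    qed
  next
    show "\<forall>a\<in>?Y. f (g a) = a"
    proof
      fix y assume "y \<in> ?Y"
      then obtain C D where y: "y = (C,D)" and a: "is_partition C" "is_partition D" "\<forall>c\<in>set C. k < c" "\<forall>d\<in>set D. d < k"
          "int (length D) \<le> h - int k + 1 + int (length C)" "int (sum_list C + sum_list D) + h + 1 = int n" by blast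
      have "map (Suc \<circ> (\<lambda>x. x - 1)) C = C"
        by (rule map_idI) (use a(3) in auto)
      moreover have "filter (\<lambda>x. 0 < x) (map (\<lambda>x. x - 1) (map Suc D @ replicate r 1)) = D" for r
        using a(2) unfolding is_partition_def by (simp add: comp_def filter_id_conv)
      ultimately show "f (g y) = y" unfolding y f_def g_def by simp
    qed
  next
    show "f ` ?X \<subseteq> ?Y"
    proof (rule image_subsetI)
      fix x assume "x \<in> ?X"
      then obtain A B where x: "x = (A,B)" and a: "is_partition A" "is_partition B" "\<forall>a\<in>set A. k \<le> a" "\<forall>b\<in>set B. b \<le> k"
          "int (length B) = h - int k + 1 + int (length A)" "sum_list A + k + sum_list B = n" by blast
      define D where "D = filter (\<lambda>x. 0 < x) (map (\<lambda>x. x - 1) B)"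
      have pC: "is_partition (map Suc A)" using a(1) unfolding is_partition_def
        by (simp add: sorted_wrt_map)
      have "sorted_wrt (\<ge>) (map (\<lambda>x. x - 1) B)" using a(2) unfolding is_partition_def
        by (intro sorted_minus1) simp
      then have pD: "is_partition D" unfolding is_partition_def D_def
        using sorted_wrt_filter by auto
      have cC: "\<forall>c\<in>set (map Suc A). k < c" using a(3) by auto
      have cD: "\<forall>d\<in>set D. d < k" using a(4) assms unfolding D_def by auto
      have lD: "length D \<le> length B" unfolding D_def by (metis length_filter_le length_map)
      have sD: "sum_list D + length B = sum_list B" unfolding D_def sum_filter_pos
        using sum_minus1[of B] a(2) unfolding is_partition_def by blast
      have sC: "sum_list (map Suc A) = sum_list A + length A" by (induction A) auto
      have "int (sum_list (map Suc A) + sum_list D) + h + 1 = int n"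
        using sD sC a(5) a(6) by linarith
      moreover have "int (length D) \<le> h - int k + 1 + int (length (map Suc A))" using lD a(5) by simp
      moreover have "f x = (map Suc A, D)" unfolding x f_def D_def by simp
      ultimately show "f x \<in> ?Y" using pC pD cC cD by simp
    qed
  next
    show "g ` ?Y \<subseteq> ?X"
    proof (rule image_subsetI)
      fix y assume "y \<in> ?Y"
      then obtain C D where y: "y = (C,D)" and a: "is_partition C" "is_partition D" "\<forall>c\<in>set C. k < c" "\<forall>d\<in>set D. d < k"
          "int (length D) \<le> h - int k + 1 + int (length C)" "int (sum_list C + sum_list D) + h + 1 = int n" by blast
      define r where "r = nat (h - int k + 1 + int (length C)) - length D"
      define A where "A = map (\<lambda>x. x - 1) C"
      define B where "B = map Suc D @ replicate r (1::nat)"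
      have pA: "is_partition A" using a(1) a(3) assms unfolding is_partition_def A_def
        by (auto simp: sorted_minus1')
      have pB: "is_partition B" using a(2) unfolding is_partition_def B_def
        by (auto simp: sorted_wrt_append sorted_wrt_map simp: sorted_rep)
      have cA: "\<forall>x\<in>set A. k \<le> x" using a(3) unfolding A_def by auto
      have cB: "\<forall>x\<in>set B. x \<le> k" using a(4) assms unfolding B_def by auto
      have lB: "int (length B) = h - int k + 1 + int (length A)"
        using a(5) unfolding B_def A_def r_def by simp
      have sA: "sum_list A + length C = sum_list C" unfolding A_def
        using sum_minus1[of C] a(3) assms by fastforce
      have sB: "sum_list B = sum_list D + length D + r" unfolding B_def
        by (induction D) (auto simp: sum_rep1)
      have "sum_list A + k + sum_list B = n" using sA sB a(5) a(6) lB
        unfolding r_def A_def B_def by simp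
      then show "g y \<in> ?X" unfolding y g_def using pA pB cA cB lB
        by (simp add: A_def B_def r_def)
    qed
  qed
  then show ?thesis by (simp add: bij_betw_same_card)
qed


lemma rsort_sorted: "sorted_wrt (\<ge>) (rev (sort (xs::nat list)))"
  by (simp add: sorted_wrt_rev)

lemma rsort_unique: "sorted_wrt (\<ge>) (mu::nat list) \<Longrightarrow> mset xs = mset mu \<Longrightarrow> rev (sort xs) = mu"
proof -
  assume a: "sorted_wrt (\<ge>) mu" "mset xs = mset mu"
  have "sort xs = rev mu"
    by (rule properties_for_sort) (use a in \<open>simp_all add: sorted_wrt_rev\<close>)
  then show ?thesis by simp
qed

lemma desc_unique: "sorted_wrt (\<ge>) (a::nat list) \<Longrightarrow> sorted_wrt (\<ge>) b \<Longrightarrow> mset a = mset b \<Longrightarrow> a = b"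
  by (metis rsort_unique)

lemma mset_split: "\<forall>x\<in>set xs. P x \<noteq> Q x \<Longrightarrow> mset (filter P xs) + mset (filter Q xs) = mset xs"
  by (induction xs) auto

lemma distinct_sub: "distinct xs \<Longrightarrow> set xs \<subseteq> set ys \<Longrightarrow> mset xs \<subseteq># mset ys"
  by (metis List.finite_set mset_set_set mset_set_set_mset_msubset
    set_mset_mset subset_imp_msubset_mset_set subset_mset.dual_order.trans)

lemma len_filter_mset: "mset a = mset b \<Longrightarrow> length (filter P a) = length (filter P b)"
  by (metis mset_filter size_mset)

lemma sum_mset_eq: "mset a = mset b \<Longrightarrow> sum_list a = sum_list (b::nat list)"
  by (metis sum_mset_sum_list)

lemma mset_filter_eq: "mset a = mset b \<Longrightarrow> mset (filter P a) = mset (filter P b)"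
  by simp

lemma recomb: "(k::nat) \<notin> set mu \<Longrightarrow> mset [1..<k] \<subseteq># mset (filter (\<lambda>p. p < k) mu) \<Longrightarrow>
  mset (filter (\<lambda>p. k < p) mu) + (mset (filter (\<lambda>p. p < k) mu) - mset [1..<k]) + mset [1..<k] = mset mu"
proof -
  assume kn: "k \<notin> set mu" and sub: "mset [1..<k] \<subseteq># mset (filter (\<lambda>p. p < k) mu)"
  have e1: "mset (filter (\<lambda>p. p < k) mu) - mset [1..<k] + mset [1..<k] = mset (filter (\<lambda>p. p < k) mu)"
    using sub by (rule subset_mset.diff_add)
  have e2: "mset (filter (\<lambda>p. k < p) mu) + mset (filter (\<lambda>p. p < k) mu) = mset mu"
  proof (rule mset_split, rule ballI)
    fix x assume "x \<in> set mu"
    then have "x \<noteq> k" using kn by auto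
    then show "(k < x) \<noteq> (x < k)" by auto
  qed
  show ?thesis by (simp only: add.assoc e1 e2)
qed

lemma mex_iff:
  assumes "k \<ge> 1"
  shows "mex mu = k \<longleftrightarrow> (k \<notin> set mu \<and> (\<forall>j. 0 < j \<and> j < k \<longrightarrow> j \<in> set mu))"
proof
  assume m: "mex mu = k"
  have ex: "\<exists>j. 0 < j \<and> j \<notin> set mu"
  proof (intro exI conjI)
    show "0 < Suc (sum_list mu)" by simp
    show "Suc (sum_list mu) \<notin> set mu" using member_le_sum_list[of _ mu] by fastforce
  qed
  have "0 < mex mu \<and> mex mu \<notin> set mu" unfolding mex_def by (rule LeastI_ex[OF ex])
  moreover have "\<forall>j. 0 < j \<and> j < mex mu \<longrightarrow> j \<in> set mu"
    unfolding mex_def using not_less_Least by blast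
  ultimately show "k \<notin> set mu \<and> (\<forall>j. 0 < j \<and> j < k \<longrightarrow> j \<in> set mu)" using m by auto
next
  assume a: "k \<notin> set mu \<and> (\<forall>j. 0 < j \<and> j < k \<longrightarrow> j \<in> set mu)"
  show "mex mu = k" unfolding mex_def
  proof (rule Least_equality)
    show "0 < k \<and> k \<notin> set mu" using a assms by auto
    show "\<And>y. 0 < y \<and> y \<notin> set mu \<Longrightarrow> k \<le> y" using a by (meson not_le)
  qed
qed

lemma stage3:
  assumes "k \<ge> 1"
  shows "card {(C,D). is_partition C \<and> is_partition D \<and> (\<forall>c\<in>set C. k < c) \<and> (\<forall>d\<in>set D. d < k)
       \<and> int (length D) \<le> h - int k + 1 + int (length C) \<and> int (sum_list C + sum_list D) + h + 1 = int n} =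
    card {mu \<in> partitions_of (int n + int (k choose 2) - (h + 1)).
                 mex mu = k \<and>
                 h + 1 + int (length (filter (\<lambda>p. p > k) mu))
                   > int (length (filter (\<lambda>p. p < k) mu))}"
    (is "card ?Y = card ?R")
proof -
  define G where "G = (\<lambda>(C::nat list,D::nat list). rev (sort (C @ D @ [1..<k])))"
  define G' where "G' = (\<lambda>mu::nat list. (filter (\<lambda>p. k < p) mu,
      rev (sorted_list_of_multiset (mset (filter (\<lambda>p. p < k) mu) - mset [1..<k]))))"
  have Gfacts: "mset (G (C,D)) = mset C + mset D + mset [1..<k]"
     "sorted_wrt (\<ge>) (G (C,D))" for C D
    unfolding G_def by (simp_all add: rsort_sorted)
  have bij: "bij_betw G ?Y ?R"
  proof (rule bij_betw_byWitness[where f'=G'])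
    show "\<forall>a\<in>?Y. G' (G a) = a"
    proof
      fix y assume "y \<in> ?Y"
      then obtain C D where y: "y = (C,D)" and a: "is_partition C" "is_partition D" "\<forall>c\<in>set C. k < c" "\<forall>d\<in>set D. d < k"
          "int (length D) \<le> h - int k + 1 + int (length C)" "int (sum_list C + sum_list D) + h + 1 = int n" by blast
      define mu where "mu = G (C,D)"
      have ms: "mset mu = mset (C @ D @ [1..<k])" using Gfacts(1) unfolding mu_def by simp
      have "filter (\<lambda>p. k < p) (C @ D @ [1..<k]) = C" using a(3,4)
        by (auto simp: filter_id_conv filter_empty_conv)
      then have m1: "mset (filter (\<lambda>p. k < p) mu) = mset C"
        using mset_filter_eq[OF ms] by metis
      have "filter (\<lambda>p. k < p) mu = C"
        by (rule desc_unique) (use m1 a(1) Gfacts(2)[of C D] in \<open>auto simp: mu_def is_partition_def sorted_wrt_filter\<close>)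
      moreover have "filter (\<lambda>p. p < k) (C @ D @ [1..<k]) = D @ [1..<k]" using a(3,4)
        by (auto simp: filter_id_conv filter_empty_conv)
      then have "mset (filter (\<lambda>p. p < k) mu) = mset D + mset [1..<k]"
        using mset_filter_eq[OF ms] by (metis mset_append)
      then have "rev (sorted_list_of_multiset (mset (filter (\<lambda>p. p < k) mu) - mset [1..<k])) = D"
        using rsort_unique[of D D] a(2) unfolding is_partition_def by simp
      ultimately show "G' (G y) = y" unfolding y G'_def mu_def by simp
    qed
  next
    show "\<forall>a\<in>?R. G (G' a) = a"
    proof
      fix mu assume "mu \<in> ?R"
      then have mp: "is_partition mu" and mx: "mex mu = k" by (auto simp: partitions_of_def)
      from mx have kn: "k \<notin> set mu" and jin: "\<forall>j. 0 < j \<and> j < k \<longrightarrow> j \<in> set mu"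
        using mex_iff[OF assms] by auto
      have sub: "mset [1..<k] \<subseteq># mset (filter (\<lambda>p. p < k) mu)"
        by (rule distinct_sub) (use jin in auto)
      have "mset (fst (G' mu)) + mset (snd (G' mu)) + mset [1..<k] = mset mu"
        unfolding G'_def using recomb[OF kn sub] by simp
      then show "G (G' mu) = mu"
        using rsort_unique[of mu] mp unfolding G_def is_partition_def
        by (cases "G' mu") (simp add: add.assoc)
    qed
  next
    show "G ` ?Y \<subseteq> ?R"
    proof (rule image_subsetI)
      fix y assume "y \<in> ?Y"
      then obtain C D where y: "y = (C,D)" and a: "is_partition C" "is_partition D" "\<forall>c\<in>set C. k < c" "\<forall>d\<in>set D. d < k"
          "int (length D) \<le> h - int k + 1 + int (length C)" "int (sum_list C + sum_list D) + h + 1 = int n" by blast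
      define mu where "mu = G (C,D)"
      have ms: "mset mu = mset (C @ D @ [1..<k])" using Gfacts(1) unfolding mu_def by simp
      then have st: "set mu = set C \<union> set D \<union> {1..<k}" by (metis set_mset_mset set_append set_upt Un_assoc)
      have pm: "is_partition mu" unfolding is_partition_def
        using Gfacts(2)[of C D] st a(1,2) unfolding mu_def is_partition_def by auto
      have "sum_list mu = sum_list (C @ D @ [1..<k])" by (rule sum_mset_eq[OF ms])
      then have sm: "int (sum_list mu) = int n + int (k choose 2) - (h + 1)"
        using a(6) sum_upt_choose[of k] by simp
      have "mex mu = k" using mex_iff[OF assms] st a(3,4) by auto
      moreover have "length (filter (\<lambda>p. p > k) mu) = length C"
        using len_filter_mset[OF ms, of "\<lambda>p. p > k"] a(3,4) by (auto simp: filter_id_conv filter_empty_conv)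
      moreover have "length (filter (\<lambda>p. p < k) mu) = length D + (k - 1)"
        using len_filter_mset[OF ms, of "\<lambda>p. p < k"] a(3,4) by (auto simp: filter_id_conv filter_empty_conv)
      ultimately have "mu \<in> ?R" using pm sm a(5) assms by (simp add: partitions_of_def)
      then show "G y \<in> ?R" using y mu_def by simp
    qed
  next
    show "G' ` ?R \<subseteq> ?Y"
    proof (rule image_subsetI)
      fix mu assume "mu \<in> ?R"
      then have mp: "is_partition mu" and mx: "mex mu = k"
        and sm: "int (sum_list mu) = int n + int (k choose 2) - (h + 1)"
        and cnt: "h + 1 + int (length (filter (\<lambda>p. p > k) mu)) > int (length (filter (\<lambda>p. p < k) mu))"
        by (auto simp: partitions_of_def)
      from mx have kn: "k \<notin> set mu" and jin: "\<forall>j. 0 < j \<and> j < k \<longrightarrow> j \<in> set mu"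
        using mex_iff[OF assms] by auto
      have sub: "mset [1..<k] \<subseteq># mset (filter (\<lambda>p. p < k) mu)"
        by (rule distinct_sub) (use jin in auto)
      define C where "C = filter (\<lambda>p. k < p) mu"
      define M where "M = mset (filter (\<lambda>p. p < k) mu) - mset [1..<k]"
      define D where "D = rev (sorted_list_of_multiset M)"
      have mD: "mset D = M" unfolding D_def by simp
      have tot: "mset C + mset D + mset [1..<k] = mset mu"
        unfolding mD M_def C_def using recomb[OF kn sub] by simp
      have pC: "is_partition C" using mp unfolding C_def is_partition_def by (auto simp: sorted_wrt_filter)
      have setD: "set D \<subseteq> set (filter (\<lambda>p. p < k) mu)"
        by (metis M_def mD in_diffD set_mset_mset subsetI)
      have pD: "is_partition D" unfolding is_partition_def
      proof
        show "sorted_wrt (\<ge>) D" unfolding D_def by (simp add: sorted_wrt_rev)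
        show "\<forall>p\<in>set D. 0 < p" using setD mp unfolding is_partition_def by auto
      qed
      have cC: "\<forall>c\<in>set C. k < c" unfolding C_def by auto
      have cD: "\<forall>d\<in>set D. d < k" using setD by auto
      have sM: "size M = length (filter (\<lambda>p. p < k) mu) - (k - 1)"
        unfolding M_def using size_Diff_submset[OF sub] by (simp del: mset_filter)
      have "k - 1 \<le> length (filter (\<lambda>p. p < k) mu)" using size_mset_mono[OF sub] by (simp del: mset_filter)
      moreover have "length D = size M" using mD by (metis size_mset)
      ultimately have lD: "length D + (k - 1) = length (filter (\<lambda>p. p < k) mu)"
        using sM by simp
      have "sum_mset (mset C + mset D + mset [1..<k]) = sum_mset (mset mu)" using tot by simp
      then have sCD: "sum_list C + sum_list D + (k choose 2) = sum_list mu"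
        by (simp only: sum_mset.union sum_mset_sum_list sum_upt_choose)
      have "int (length D) \<le> h - int k + 1 + int (length C)"
        using cnt lD assms unfolding C_def by linarith
      moreover have "int (sum_list C + sum_list D) + h + 1 = int n" using sCD sm by linarith
      ultimately have "(C, D) \<in> ?Y" using pC pD cC cD by simp
      then show "G' mu \<in> ?Y" unfolding G'_def C_def D_def M_def by simp
    qed
  qed
  then show ?thesis by (simp add: bij_betw_same_card)
qed

theorem theorem3p4:
  fixes h :: int and k n :: nat
  assumes "k \<ge> 1"
  shows "card {lam \<in> partitions_of (int n). has_fixed_hook h k lam}
       = card {mu \<in> partitions_of (int n + int (k choose 2) - (h + 1)).
                 mex mu = k \<and>
                 h + 1 + int (length (filter (\<lambda>p. p > k) mu))
                   > int (length (filter (\<lambda>p. p < k) mu))}"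
  using stage1[OF assms, of n h] stage2[OF assms, of h n] stage3[OF assms, of h n] by simp

end
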